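(* Let $(p,s)$ be $(1,2)$ or $(2,1)$, let $r,t\in S$ (initial and target state), and let $\overline{f_1},\overline{f_2}$ be reals. For a state $u$ from which $t$ is reachable, let $\pi^p_u$ be a $u$-$t$ path lexicographically minimal in $(\mathit{cost}_p,\mathit{cost}_s)$ and $\pi^s_u$ a $u$-$t$ path lexicographically minimal in $(\mathit{cost}_s,\mathit{cost}_p)$, and set $h_p(u)=\mathit{cost}_p(\pi^p_u)$, $ub_s(u)=\mathit{cost}_s(\pi^p_u)$, $h_s(u)=\mathit{cost}_s(\pi^s_u)$, $ub_p(u)=\mathit{cost}_p(\pi^s_u)$. Let $P$ be a path from $r$ to $u$ with $g_q=\mathit{cost}_q(P)$, which is valid, i.e. $g_1+h_1(u)\le\overline{f_1}$ and $g_2+h_2(u)\le\overline{f_2}$, and which is terminal, i.e. $h_p(u)=ub_p(u)$. Then $P$ is a tentative solution: $g_s+ub_s(u)\le\overline{f_s}$, so that $P$ followed by $\pi^p_u$ is an $r$-$t$ path with $\mathit{cost}_p=g_p+h_p(u)\le\overline{f_p}$ and $\mathit{cost}_s\le\overline{f_s}$.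
   Context: $G=(S,E)$ is a directed graph with non-negative edge costs $\mathit{cost}_1,\mathit{cost}_2$; a path is a sequence of states with consecutive pairs in $E$, and $\mathit{cost}_q$ of a path is the sum of $\mathit{cost}_q$ over its edges. *)

theory Defs
  imports Complex_Main
begin

definition is_path :: "'a set \<Rightarrow> ('a \<times> 'a) set \<Rightarrow> 'a list \<Rightarrow> bool" where
  "is_path S E xs \<longleftrightarrow> xs \<noteq> [] \<and> set xs \<subseteq> S \<and>
     (\<forall>i. Suc i < length xs \<longrightarrow> (xs ! i, xs ! Suc i) \<in> E)"

definition path_from_to :: "'a set \<Rightarrow> ('a \<times> 'a) set \<Rightarrow> 'a \<Rightarrow> 'a \<Rightarrow> 'a list \<Rightarrow> bool" where
  "path_from_to S E u v xs \<longleftrightarrow> is_path S E xs \<and> hd xs = u \<and> last xs = v"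

definition path_cost :: "('a \<Rightarrow> 'a \<Rightarrow> real) \<Rightarrow> 'a list \<Rightarrow> real" where
  "path_cost c xs = (\<Sum>i < length xs - 1. c (xs ! i) (xs ! Suc i))"

definition lex_min_path ::
  "'a set \<Rightarrow> ('a \<times> 'a) set \<Rightarrow> ('a \<Rightarrow> 'a \<Rightarrow> real) \<Rightarrow> ('a \<Rightarrow> 'a \<Rightarrow> real) \<Rightarrow> 'a \<Rightarrow> 'a \<Rightarrow> 'a list \<Rightarrow> bool" where
  "lex_min_path S E c c' u v w \<longleftrightarrow> path_from_to S E u v w \<and>
     (\<forall>w'. path_from_to S E u v w' \<longrightarrow>
        path_cost c w < path_cost c w' \<or>
        (path_cost c w = path_cost c w' \<and> path_cost c' w \<le> path_cost c' w'))"

end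

theory Submission
  imports Defs
begin

lemma pc_single[simp]: "path_cost c [x] = 0"
  by (simp add: path_cost_def)

lemma pc_cons2[simp]: "path_cost c (x # y # xs) = c x y + path_cost c (y # xs)"
  unfolding path_cost_def by (simp add: sum.lessThan_Suc_shift del: sum.lessThan_Suc)

lemma pc_append:
  assumes "P \<noteq> []" "Q \<noteq> []" "last P = hd Q"
  shows "path_cost c (P @ tl Q) = path_cost c P + path_cost c Q"
  using assms
proof (induction P rule: induct_list012)
  case 1 then show ?case by simp
next
  case (2 x)
  then show ?case by (cases Q) auto
next
  case (3 x y zs)
  then show ?case by simp
qed

lemma ip_cons2[simp]: "is_path S E (x # y # xs) \<longleftrightarrow> x \<in> S \<and> (x, y) \<in> E \<and> is_path S E (y # xs)"
  unfolding is_path_def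
  apply (auto simp: less_Suc_eq_0_disj)
  done

lemma ip_single[simp]: "is_path S E [x] \<longleftrightarrow> x \<in> S"
  unfolding is_path_def by auto

lemma ip_append:
  assumes "is_path S E P" "is_path S E Q" "last P = hd Q"
  shows "is_path S E (P @ tl Q)"
  using assms
proof (induction P rule: induct_list012)
  case 1 then show ?case by (simp add: is_path_def)
next
  case (2 x)
  then show ?case by (cases Q) auto
next
  case (3 x y zs)
  then show ?case by simp
qed

theorem lemma11:
  fixes S :: "'a set" and E :: "('a \<times> 'a) set"
    and cost :: "nat \<Rightarrow> 'a \<Rightarrow> 'a \<Rightarrow> real" and fbar :: "nat \<Rightarrow> real"
    and p s :: nat and r t u :: 'a and P pip pis :: "'a list"
  assumes E_sub: "E \<subseteq> S \<times> S"
    and nonneg: "\<And>q x y. q \<in> {1, 2} \<Longrightarrow> (x, y) \<in> E \<Longrightarrow> cost q x y \<ge> 0"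
    and ps: "(p, s) = (1, 2) \<or> (p, s) = (2, 1)"
    and r: "r \<in> S" and t: "t \<in> S"
    and pip: "lex_min_path S E (cost p) (cost s) u t pip"
    and pis: "lex_min_path S E (cost s) (cost p) u t pis"
    and P: "path_from_to S E r u P"
    and valid_p: "path_cost (cost p) P + path_cost (cost p) pip \<le> fbar p"
    and valid_s: "path_cost (cost s) P + path_cost (cost s) pis \<le> fbar s"
    and terminal: "path_cost (cost p) pip = path_cost (cost p) pis"
  shows "path_cost (cost s) P + path_cost (cost s) pip \<le> fbar s
    \<and> path_from_to S E r t (P @ tl pip)
    \<and> path_cost (cost p) (P @ tl pip) = path_cost (cost p) P + path_cost (cost p) pip
    \<and> path_cost (cost p) (P @ tl pip) \<le> fbar p
    \<and> path_cost (cost s) (P @ tl pip) \<le> fbar s"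
proof -
  have pisp: "path_from_to S E u t pis" using pis unfolding lex_min_path_def by blast
  have pipp: "path_from_to S E u t pip" using pip unfolding lex_min_path_def by blast
  have le: "path_cost (cost s) pip \<le> path_cost (cost s) pis"
    using pip pisp terminal unfolding lex_min_path_def by fastforce
  have ne: "P \<noteq> []" "pip \<noteq> []" using P pipp unfolding path_from_to_def is_path_def by auto
  have lh: "last P = hd pip" using P pipp unfolding path_from_to_def by auto
  have c: "\<And>c. path_cost c (P @ tl pip) = path_cost c P + path_cost c pip"
    using pc_append[OF ne lh] .
  have ip: "is_path S E (P @ tl pip)"
    using ip_append[OF _ _ lh] P pipp unfolding path_from_to_def by blast
  have hd: "hd (P @ tl pip) = r" using P ne unfolding path_from_to_def by simp
  have la: "last (P @ tl pip) = t"
  proof (cases "tl pip = []")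
    case True
    then have "pip = [hd pip]" using ne by (cases pip) auto
    then show ?thesis using True lh pipp unfolding path_from_to_def by (metis append.right_neutral last.simps)
  next
    case False
    then show ?thesis using pipp ne unfolding path_from_to_def by (simp add: last_tl)
  qed
  show ?thesis using c ip hd la le valid_p valid_s unfolding path_from_to_def by auto
qed

end
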